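(* For every integer $k\ge3$ and every item sequence $I\in(0,1]^n$, $MM_k(I)\le\left(\lambda_k-\frac1k\right)\cdot OPT_k(I)+k$.
   Context: Define $\pi_1=2$, $\pi_{i+1}=\pi_i(\pi_i-1)+1$ for $i\ge1$, and $\lambda_j=\sum_{i=1}^j\max\{\frac{1}{\pi_i-1},\frac1j\}$ for $j\ge1$. The $k$-cardinality constrained bin packing problem: an item sequence $I\in(0,1]^n$ must be packed into bins of capacity $1$ with at most $k$ items per bin; $OPT_k(I)$ is the minimum number of non-empty bins, and $ALG(I)$ the number of non-empty bins used by $ALG$. Algorithm $MM_k$: sort the items in non-increasing order; keep a single open bin with load $S$. Repeat while items remain: if the open bin already contains $k$ items, close it and open a new bin; else if the head (largest remaining) item fits ($S+\text{head}\le1$) pack it; else if the tail (smallest remaining) item fits pack it; else close the open bin permanently and open a new empty bin. *)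

theory Defs
  imports Complex_Main
begin

(* Sylvester sequence, 1-indexed: pi 1 = 2, pi (i+1) = pi i * (pi i - 1) + 1 *)
fun sylv :: "nat \<Rightarrow> nat" where
  "sylv 0 = 2"
| "sylv (Suc i) = sylv i * (sylv i - 1) + 1"

definition pi_seq :: "nat \<Rightarrow> nat" where
  "pi_seq i = sylv (i - 1)"

definition lambda_seq :: "nat \<Rightarrow> real" where
  "lambda_seq j = (\<Sum>i=1..j. max (1 / (real (pi_seq i) - 1)) (1 / real j))"

definition feasible_packing :: "nat \<Rightarrow> real list \<Rightarrow> (nat \<Rightarrow> nat) \<Rightarrow> bool" where
  "feasible_packing k I f \<longleftrightarrow>
     (\<forall>b. card {i. i < length I \<and> f i = b} \<le> k
          \<and> (\<Sum>i\<in>{i. i < length I \<and> f i = b}. I ! i) \<le> 1)"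

definition used_bins :: "real list \<Rightarrow> (nat \<Rightarrow> nat) \<Rightarrow> nat" where
  "used_bins I f = card (f ` {..<length I})"

definition OPT :: "nat \<Rightarrow> real list \<Rightarrow> nat" where
  "OPT k I = (LEAST m. \<exists>f. feasible_packing k I f \<and> used_bins I f = m)"

(* Algorithm MM_k on a non-increasingly sorted list of remaining items.
   S = load of the open bin, cur = contents of the open bin.
   The branch "cur = [] and nothing fits" is unreachable for items in (0,1]
   and only serves to make the function total. *)
function mm_aux :: "nat \<Rightarrow> real \<Rightarrow> real list \<Rightarrow> real list \<Rightarrow> real list list" where
  "mm_aux k S cur [] = [cur]"
| "mm_aux k S cur (x # xs) =
    (if cur \<noteq> [] \<and> length cur \<ge> k then cur # mm_aux k 0 [] (x # xs)
     else if S + x \<le> 1 then mm_aux k (S + x) (x # cur) xs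
     else if S + last (x # xs) \<le> 1
       then mm_aux k (S + last (x # xs)) (last (x # xs) # cur) (butlast (x # xs))
     else if cur = [] then [x # xs]
     else cur # mm_aux k 0 [] (x # xs))"
  by pat_completeness auto
termination
  by (relation "measure (\<lambda>(k, S, cur, xs). 2 * length xs + (if cur = [] then 0 else 1))") auto

definition MM :: "nat \<Rightarrow> real list \<Rightarrow> nat" where
  "MM k I = length (filter (\<lambda>b. b \<noteq> []) (mm_aux k 0 [] (rev (sort I))))"

end

theory Submission
  imports Defs "HOL-Library.Multiset"
begin

function mmg :: "('a \<Rightarrow> real) \<Rightarrow> nat \<Rightarrow> real \<Rightarrow> 'a list \<Rightarrow> 'a list \<Rightarrow> 'a list list" where
  "mmg v k S cur [] = [cur]"
| "mmg v k S cur (x # xs) =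
    (if cur \<noteq> [] \<and> length cur \<ge> k then cur # mmg v k 0 [] (x # xs)
     else if S + v x \<le> 1 then mmg v k (S + v x) (x # cur) xs
     else if S + v (last (x # xs)) \<le> 1
       then mmg v k (S + v (last (x # xs))) (last (x # xs) # cur) (butlast (x # xs))
     else if cur = [] then [x # xs]
     else cur # mmg v k 0 [] (x # xs))"
  by pat_completeness auto
termination
  by (relation "measure (\<lambda>(v, k, S, cur, xs). 2 * length xs + (if cur = [] then 0 else 1))") auto

declare mmg.simps(2)[simp del]

lemma mmg_close: "cur \<noteq> [] \<Longrightarrow> length cur \<ge> k \<Longrightarrow> mmg v k S cur (x#xs) = cur # mmg v k 0 [] (x#xs)"
  by (subst mmg.simps(2)) auto
lemma mmg_head: "\<not>(cur \<noteq> [] \<and> length cur \<ge> k) \<Longrightarrow> S + v x \<le> 1 \<Longrightarrow>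
   mmg v k S cur (x#xs) = mmg v k (S + v x) (x#cur) xs"
  by (subst mmg.simps(2)) auto
lemma mmg_tail: "\<not>(cur \<noteq> [] \<and> length cur \<ge> k) \<Longrightarrow> \<not> S + v x \<le> 1 \<Longrightarrow> S + v (last (x#xs)) \<le> 1 \<Longrightarrow>
   mmg v k S cur (x#xs) = mmg v k (S + v (last (x#xs))) (last (x#xs) # cur) (butlast (x#xs))"
  by (subst mmg.simps(2)) auto
lemma mmg_stop: "\<not>(cur \<noteq> [] \<and> length cur \<ge> k) \<Longrightarrow> \<not> S + v x \<le> 1 \<Longrightarrow> \<not> S + v (last (x#xs)) \<le> 1 \<Longrightarrow>
   cur \<noteq> [] \<Longrightarrow> mmg v k S cur (x#xs) = cur # mmg v k 0 [] (x#xs)"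
  by (subst mmg.simps(2)) auto

lemma mm_aux_mmg:
  "mm_aux k S (map v cur) (map v xs) = map (map v) (mmg v k S cur xs)"
proof (induction v k S cur xs rule: mmg.induct)
  case (1 v k S cur)
  then show ?case by simp
next
  case (2 v k S cur x xs)
  have l: "last (v x # map v xs) = v (last (x # xs))"
    by (metis last_map list.simps(9) list.distinct(1))
  have b: "butlast (v x # map v xs) = map v (butlast (x # xs))"
    by (metis map_butlast list.simps(9))
  have e1: "mm_aux k S (map v cur) (map v (x # xs)) = mm_aux k S (map v cur) (v x # map v xs)" by simp
  show ?case unfolding e1 mm_aux.simps(2)[of k S "map v cur" "v x" "map v xs"] mmg.simps(2)[of v k S cur x xs] l b
    using 2 by (auto simp del: mm_aux.simps mmg.simps)
qed

lemma tail_phase: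
  assumes "cur \<noteq> []" "xs \<noteq> []" "S + v (hd xs) > 1" "\<forall>x\<in>set xs. 0 \<le> v x"
    "S = sum_list (map v cur)" "S \<le> 1"
  shows "\<exists>M Tl c. xs = M @ Tl \<and> M \<noteq> [] \<and> mset c = mset cur + mset Tl
     \<and> sum_list (map v c) = S + sum_list (map v Tl) \<and> sum_list (map v c) \<le> 1
     \<and> mmg v k S cur xs = c # mmg v k 0 [] M
     \<and> (length c \<ge> k \<or> (sum_list (map v c) + v (hd M) > 1 \<and> sum_list (map v c) + v (last M) > 1))"
  using assms
proof (induction "length xs" arbitrary: S cur xs rule: less_induct)
  case less
  obtain x xs' where xs: "xs = x # xs'" using less.prems(2) by (cases xs) auto
  show ?case
  proof (cases "length cur \<ge> k")
    case True
    have e0: "mmg v k S cur xs = cur # mmg v k 0 [] xs" using True xs less.prems(1) mmg_close by simp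
    show ?thesis
      apply (rule exI[of _ xs], rule exI[of _ "[] :: 'a list"], rule exI[of _ cur])
      using True less.prems e0 by simp
  next
    case False
    have nf: "\<not> S + v x \<le> 1" using less.prems(3) xs by simp
    show ?thesis
    proof (cases "S + v (last xs) \<le> 1")
      case True
      have "xs' \<noteq> []" using True nf xs by auto
      define y where "y = last xs"
      define zs where "zs = butlast xs"
      have xsz: "xs = zs @ [y]" using xs unfolding y_def zs_def by simp
      have zs_ne: "zs \<noteq> []" using \<open>xs' \<noteq> []\<close> xs unfolding zs_def by simp
      have hdz: "hd zs = x" using \<open>xs' \<noteq> []\<close> xs unfolding zs_def by (cases xs') auto
      have e: "mmg v k S cur xs = mmg v k (S + v y) (y # cur) zs"
        using False nf True xs mmg_tail[of cur k S v x xs'] unfolding y_def zs_def by simp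
      have vy: "0 \<le> v y" using less.prems(4) xs unfolding y_def by simp
      have "\<exists>M Tl c. zs = M @ Tl \<and> M \<noteq> [] \<and> mset c = mset (y # cur) + mset Tl
     \<and> sum_list (map v c) = (S + v y) + sum_list (map v Tl) \<and> sum_list (map v c) \<le> 1
     \<and> mmg v k (S + v y) (y # cur) zs = c # mmg v k 0 [] M
     \<and> (length c \<ge> k \<or> (sum_list (map v c) + v (hd M) > 1 \<and> sum_list (map v c) + v (last M) > 1))"
        apply (rule less.hyps)
        using xsz zs_ne hdz less.prems vy True nf xs unfolding y_def by auto
      then obtain M Tl c where H: "zs = M @ Tl" "M \<noteq> []" "mset c = mset (y # cur) + mset Tl"
        "sum_list (map v c) = (S + v y) + sum_list (map v Tl)" "sum_list (map v c) \<le> 1"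
        "mmg v k (S + v y) (y # cur) zs = c # mmg v k 0 [] M"
        "(length c \<ge> k \<or> (sum_list (map v c) + v (hd M) > 1 \<and> sum_list (map v c) + v (last M) > 1))"
        by blast
      show ?thesis
        apply (rule exI[of _ M], rule exI[of _ "Tl @ [y]"], rule exI[of _ c])
        using H e xsz by auto
    next
      case False2: False
      have e0: "mmg v k S cur xs = cur # mmg v k 0 [] xs" using False nf False2 xs less.prems(1)
          mmg_stop[of cur k S v x xs'] by simp
      show ?thesis
        apply (rule exI[of _ xs], rule exI[of _ "[] :: 'a list"], rule exI[of _ cur])
        using less.prems nf False2 xs e0 by auto
    qed
  qed
qed

abbreviation sv :: "('a \<Rightarrow> real) \<Rightarrow> 'a list \<Rightarrow> real" where
  "sv v xs \<equiv> sum_list (map v xs)"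

lemma head_phase:
  assumes "S = sv v cur" "S \<le> 1" "\<forall>x\<in>set xs. 0 \<le> v x \<and> v x \<le> 1"
  shows "\<exists>H M Tl c. xs = H @ M @ Tl \<and> mset c = mset cur + mset H + mset Tl
     \<and> sv v c = S + sv v H + sv v Tl \<and> sv v c \<le> 1
     \<and> (length cur + length H \<ge> k \<or> M @ Tl = [] \<or> S + sv v H + v (hd (M @ Tl)) > 1)
     \<and> ((M = [] \<and> Tl = [] \<and> mmg v k S cur xs = [c]) \<or>
        (M \<noteq> [] \<and> mmg v k S cur xs = c # mmg v k 0 [] M
         \<and> (length c \<ge> k \<or> (sv v c + v (hd M) > 1 \<and> sv v c + v (last M) > 1))))"
  using assms
proof (induction xs arbitrary: S cur)
  case Nil
  show ?case
    apply (rule exI[of _ "[] :: 'a list"], rule exI[of _ "[] :: 'a list"], rule exI[of _ "[] :: 'a list"], rule exI[of _ cur])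
    using Nil by simp
next
  case (Cons x xs)
  show ?case
  proof (cases "cur \<noteq> [] \<and> length cur \<ge> k")
    case True
    have e0: "mmg v k S cur (x # xs) = cur # mmg v k 0 [] (x # xs)" using True by (intro mmg_close) auto
    show ?thesis
      apply (rule exI[of _ "[] :: 'a list"], rule exI[of _ "x # xs"], rule exI[of _ "[] :: 'a list"], rule exI[of _ cur])
      using True Cons.prems e0 by simp
  next
    case False
    show ?thesis
    proof (cases "S + v x \<le> 1")
      case True
      have e0: "mmg v k S cur (x # xs) = mmg v k (S + v x) (x # cur) xs" using True False by (intro mmg_head) auto
      have "\<exists>H M Tl c. xs = H @ M @ Tl \<and> mset c = mset (x # cur) + mset H + mset Tl
       \<and> sv v c = (S + v x) + sv v H + sv v Tl \<and> sv v c \<le> 1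
       \<and> (length (x # cur) + length H \<ge> k \<or> M @ Tl = [] \<or> (S + v x) + sv v H + v (hd (M @ Tl)) > 1)
       \<and> ((M = [] \<and> Tl = [] \<and> mmg v k (S + v x) (x # cur) xs = [c]) \<or>
          (M \<noteq> [] \<and> mmg v k (S + v x) (x # cur) xs = c # mmg v k 0 [] M
           \<and> (length c \<ge> k \<or> (sv v c + v (hd M) > 1 \<and> sv v c + v (last M) > 1))))"
        apply (rule Cons.IH) using Cons.prems True by auto
      then obtain H M Tl c where HH: "xs = H @ M @ Tl" "mset c = mset (x # cur) + mset H + mset Tl"
       "sv v c = (S + v x) + sv v H + sv v Tl" "sv v c \<le> 1"
       "(length (x # cur) + length H \<ge> k \<or> M @ Tl = [] \<or> (S + v x) + sv v H + v (hd (M @ Tl)) > 1)"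
       "((M = [] \<and> Tl = [] \<and> mmg v k (S + v x) (x # cur) xs = [c]) \<or>
          (M \<noteq> [] \<and> mmg v k (S + v x) (x # cur) xs = c # mmg v k 0 [] M
           \<and> (length c \<ge> k \<or> (sv v c + v (hd M) > 1 \<and> sv v c + v (last M) > 1))))"
        by blast
      show ?thesis
        apply (rule exI[of _ "x # H"], rule exI[of _ M], rule exI[of _ Tl], rule exI[of _ c])
        using HH e0 by (auto simp: add.assoc)
    next
      case nf: False
      have cne: "cur \<noteq> []" using nf Cons.prems by auto
      have "\<exists>M Tl c. x # xs = M @ Tl \<and> M \<noteq> [] \<and> mset c = mset cur + mset Tl
         \<and> sum_list (map v c) = S + sum_list (map v Tl) \<and> sum_list (map v c) \<le> 1
         \<and> mmg v k S cur (x # xs) = c # mmg v k 0 [] M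
         \<and> (length c \<ge> k \<or> (sum_list (map v c) + v (hd M) > 1 \<and> sum_list (map v c) + v (last M) > 1))"
        apply (rule tail_phase) using cne nf Cons.prems by auto
      then obtain M Tl c where TT: "x # xs = M @ Tl" "M \<noteq> []" "mset c = mset cur + mset Tl"
         "sum_list (map v c) = S + sum_list (map v Tl)" "sum_list (map v c) \<le> 1"
         "mmg v k S cur (x # xs) = c # mmg v k 0 [] M"
         "(length c \<ge> k \<or> (sum_list (map v c) + v (hd M) > 1 \<and> sum_list (map v c) + v (last M) > 1))"
        by blast
      have hdM: "hd M = x" using TT(1,2) by (cases M) auto
      show ?thesis
        apply (rule exI[of _ "[] :: 'a list"], rule exI[of _ M], rule exI[of _ Tl], rule exI[of _ c])
        using TT nf hdM by (simp add: hd_append)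
    qed
  qed
qed

definition valid :: "('a \<Rightarrow> real) \<Rightarrow> 'a list \<Rightarrow> bool" where
  "valid v xs \<longleftrightarrow> sorted_wrt (\<lambda>i j. v j \<le> v i) xs \<and> distinct xs \<and> (\<forall>i\<in>set xs. 0 < v i \<and> v i \<le> 1)"

lemma valid_mid: "valid v (H @ M @ Tl) \<Longrightarrow> valid v M"
  unfolding valid_def by (auto simp: sorted_wrt_append)

lemma step:
  assumes "valid v xs" "xs \<noteq> []" "k \<ge> 3"
  shows "\<exists>H M Tl c. xs = H @ M @ Tl \<and> H \<noteq> [] \<and> set c = set H \<union> set Tl \<and> distinct c
     \<and> length c = length H + length Tl
     \<and> sv v c = sv v H + sv v Tl \<and> sv v c \<le> 1
     \<and> (length H \<ge> k \<or> M @ Tl = [] \<or> sv v H + v (hd (M @ Tl)) > 1)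
     \<and> ((M = [] \<and> Tl = [] \<and> mmg v k 0 [] xs = [c]) \<or>
        (M \<noteq> [] \<and> mmg v k 0 [] xs = c # mmg v k 0 [] M
         \<and> (length c \<ge> k \<or> (sv v c + v (hd M) > 1 \<and> sv v c + v (last M) > 1))))"
proof -
  have "\<exists>H M Tl c. xs = H @ M @ Tl \<and> mset c = mset ([]::'a list) + mset H + mset Tl
     \<and> sv v c = 0 + sv v H + sv v Tl \<and> sv v c \<le> 1
     \<and> (length ([]::'a list) + length H \<ge> k \<or> M @ Tl = [] \<or> 0 + sv v H + v (hd (M @ Tl)) > 1)
     \<and> ((M = [] \<and> Tl = [] \<and> mmg v k 0 [] xs = [c]) \<or>
        (M \<noteq> [] \<and> mmg v k 0 [] xs = c # mmg v k 0 [] M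
         \<and> (length c \<ge> k \<or> (sv v c + v (hd M) > 1 \<and> sv v c + v (last M) > 1))))"
    apply (rule head_phase) using assms(1) unfolding valid_def by auto
  then obtain H M Tl c where HH0: "xs = H @ M @ Tl" "mset c = mset ([]::'a list) + mset H + mset Tl"
     "sv v c = 0 + sv v H + sv v Tl" "sv v c \<le> 1"
     "(length ([]::'a list) + length H \<ge> k \<or> M @ Tl = [] \<or> 0 + sv v H + v (hd (M @ Tl)) > 1)"
     "((M = [] \<and> Tl = [] \<and> mmg v k 0 [] xs = [c]) \<or>
        (M \<noteq> [] \<and> mmg v k 0 [] xs = c # mmg v k 0 [] M
         \<and> (length c \<ge> k \<or> (sv v c + v (hd M) > 1 \<and> sv v c + v (last M) > 1))))"
    by blast
  have HH: "xs = H @ M @ Tl" "mset c = mset H + mset Tl"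
     "sv v c = sv v H + sv v Tl" "sv v c \<le> 1"
     "(length H \<ge> k \<or> M @ Tl = [] \<or> sv v H + v (hd (M @ Tl)) > 1)"
     "((M = [] \<and> Tl = [] \<and> mmg v k 0 [] xs = [c]) \<or>
        (M \<noteq> [] \<and> mmg v k 0 [] xs = c # mmg v k 0 [] M
         \<and> (length c \<ge> k \<or> (sv v c + v (hd M) > 1 \<and> sv v c + v (last M) > 1))))"
    using HH0 by (simp_all only: mset.simps(1) add_0 list.size(3))
  have Hne: "H \<noteq> []"
  proof
    assume "H = []"
    then have "M @ Tl = xs" using HH(1) by simp
    then show False using HH(5) \<open>H = []\<close> assms unfolding valid_def by (cases xs) auto
  qed
  have "distinct (H @ Tl)" using assms(1) HH(1) unfolding valid_def by auto
  then have dc: "distinct c" using HH(2) mset_eq_imp_distinct_iff[of c "H @ Tl"] by simp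
  have sc: "set c = set H \<union> set Tl"
    by (metis HH(2) mset_append set_append set_mset_mset)
  have lc: "length c = length H + length Tl"
    by (metis HH(2) length_append size_mset mset_append)
  show ?thesis
    apply (rule exI[of _ H], rule exI[of _ M], rule exI[of _ Tl], rule exI[of _ c])
    using HH Hne dc sc lc by blast
qed

lemma sorted_hd_max: fixes v :: "'a \<Rightarrow> real" shows "sorted_wrt (\<lambda>i j. v j \<le> v i) xs \<Longrightarrow> xs \<noteq> [] \<Longrightarrow> i \<in> set xs \<Longrightarrow> v i \<le> v (hd xs)"
  by (cases xs) auto

lemma sorted_last_min: fixes v :: "'a \<Rightarrow> real" shows "sorted_wrt (\<lambda>i j. v j \<le> v i) M \<Longrightarrow> M \<noteq> [] \<Longrightarrow> i \<in> set M \<Longrightarrow> v (last M) \<le> v i"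
proof -
  assume a: "sorted_wrt (\<lambda>i j. v j \<le> v i) M" "M \<noteq> []" "i \<in> set M"
  have "M = butlast M @ [last M]" using a(2) by simp
  then have "sorted_wrt (\<lambda>i j. v j \<le> v i) (butlast M @ [last M])" using a(1) by simp
  then have "\<forall>x\<in>set (butlast M). v (last M) \<le> v x" by (simp add: sorted_wrt_append)
  moreover have "i \<in> set (butlast M) \<or> i = last M" using a(2,3)
    by (metis \<open>M = butlast M @ [last M]\<close> butlast_snoc in_set_butlast_appendI last_appendR
        last_in_set list.distinct(1) rotate1.simps(2) set_rotate1 set_ConsD)
  ultimately show ?thesis by auto
qed

lemma bin_nonB:
  assumes "valid v xs" "xs = H @ M @ Tl" "H \<noteq> []" "M \<noteq> []" "k \<ge> 3"
    "length H \<ge> k \<or> M @ Tl = [] \<or> sv v H + v (hd (M @ Tl)) > 1"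
    "length c \<ge> k \<or> (sv v c + v (hd M) > 1 \<and> sv v c + v (last M) > 1)"
    "sv v c = sv v H + sv v Tl" "length c = length H + length Tl" "v (hd xs) \<le> 1/2"
  shows "length c \<ge> k \<or> (length c \<ge> 2 \<and> sv v c > 2/3)"
proof -
  have srt: "sorted_wrt (\<lambda>i j. v j \<le> v i) xs" and pos: "\<forall>i\<in>set xs. 0 < v i \<and> v i \<le> 1"
    using assms(1) unfolding valid_def by auto
  have xsne: "xs \<noteq> []" using assms(2,3) by simp
  have small: "\<forall>i\<in>set xs. v i \<le> 1/2" using sorted_hd_max[OF srt xsne] assms(10) by fastforce
  obtain h1 H1 where H: "H = h1 # H1" using assms(3) by (cases H) auto
  have sep: "\<forall>x\<in>set H. \<forall>y\<in>set (M @ Tl). v y \<le> v x" using srt assms(2) by (simp add: sorted_wrt_append)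
  have hdM: "hd M \<in> set M" using assms(4) by simp
  show ?thesis
  proof (cases "length c \<ge> k")
    case True then show ?thesis by simp
  next
    case False
    have cl: "sv v c + v (hd M) > 1" using False assms(7) by simp
    have H1ne: "H1 \<noteq> []"
    proof
      assume "H1 = []"
      then have "\<not> length H \<ge> k" using H assms(5) by simp
      moreover have "M @ Tl \<noteq> []" using assms(4) by simp
      ultimately have "sv v H + v (hd (M @ Tl)) > 1" using assms(6) by blast
      moreover have "sv v H = v h1" using H \<open>H1 = []\<close> by simp
      moreover have "v h1 \<le> 1/2" using small assms(2) H by simp
      moreover have "v (hd (M @ Tl)) \<le> 1/2" using small assms(2,4) by (simp add: hd_append)
      ultimately show False by simp
    qed
    obtain h2 H2 where H1: "H1 = h2 # H2" using H1ne by (cases H1) auto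
    have "v (hd M) \<le> v h1" "v (hd M) \<le> v h2" using sep hdM H H1 by auto
    have nn: "0 \<le> sv v H2" "0 \<le> sv v Tl"
      using pos assms(2) H H1 by (auto intro!: sum_list_nonneg simp: less_imp_le)
    have "sv v c = v h1 + v h2 + sv v H2 + sv v Tl" using assms(8) H H1 by simp
    then have "sv v c \<ge> 2 * v (hd M)" using \<open>v (hd M) \<le> v h1\<close> \<open>v (hd M) \<le> v h2\<close> nn by linarith
    then have "sv v c > 2/3" using cl by linarith
    moreover have "length c \<ge> 2" using assms(9) H H1 by simp
    ultimately show ?thesis by simp
  qed
qed

lemma bin_B:
  assumes "valid v xs" "xs = H @ M @ Tl" "H \<noteq> []" "set c = set H \<union> set Tl" "distinct c"
    "length c = length H + length Tl" "sv v c = sv v H + sv v Tl" "sv v c \<le> 1" "v (hd xs) > 1/2"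
  shows "hd xs \<in> set c" "\<forall>i\<in>set c. i \<noteq> hd xs \<longrightarrow> v i < 1/2"
    "length xs \<ge> 2 \<Longrightarrow> v (xs ! 1) > 1/2 \<Longrightarrow> M \<noteq> [] \<Longrightarrow>
     (length c \<ge> k \<or> (sv v c + v (hd M) > 1 \<and> sv v c + v (last M) > 1)) \<Longrightarrow>
     finite Q \<Longrightarrow> hd xs \<in> Q \<Longrightarrow> card Q \<le> k \<Longrightarrow> sum v Q \<le> 1 \<Longrightarrow> (\<forall>i\<in>Q. 0 \<le> v i) \<Longrightarrow>
     card (Q \<inter> set M) + 1 \<le> length c"
proof -
  have srt: "sorted_wrt (\<lambda>i j. v j \<le> v i) xs" and pos: "\<forall>i\<in>set xs. 0 < v i \<and> v i \<le> 1"
    and dxs: "distinct xs"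
    using assms(1) unfolding valid_def by auto
  have hdx: "hd xs = hd H" using assms(2,3) by simp
  show hc: "hd xs \<in> set c" using hdx assms(3,4) by simp
  have cxs: "set c \<subseteq> set xs" using assms(2,4) by auto
  have svc: "sv v c = sum v (set c)" using assms(5) by (simp add: sum_list_distinct_conv_sum_set)
  show "\<forall>i\<in>set c. i \<noteq> hd xs \<longrightarrow> v i < 1/2"
  proof (intro ballI impI)
    fix i assume i: "i \<in> set c" "i \<noteq> hd xs"
    have "sum v {hd xs, i} \<le> sum v (set c)"
      apply (rule sum_mono2) using i hc cxs pos by (auto simp: less_imp_le)
    then have "v (hd xs) + v i \<le> 1" using i svc assms(8) by simp
    then show "v i < 1/2" using assms(9) by simp
  qed
  assume l2: "length xs \<ge> 2" and b2: "v (xs ! 1) > 1/2" and Mne: "M \<noteq> []"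
    and cl: "(length c \<ge> k \<or> (sv v c + v (hd M) > 1 \<and> sv v c + v (last M) > 1))"
    and Q: "finite Q" "hd xs \<in> Q" "card Q \<le> k" "sum v Q \<le> 1" "\<forall>i\<in>Q. 0 \<le> v i"
  obtain x1 H' where H: "H = x1 # H'" using assms(3) by (cases H) auto
  have nnTl: "0 \<le> sv v Tl" using pos assms(2) by (auto intro!: sum_list_nonneg simp: less_imp_le)
  have H'e: "H' = []"
  proof (rule ccontr)
    assume "H' \<noteq> []"
    then obtain x2 H'' where H': "H' = x2 # H''" by (cases H') auto
    have "xs ! 1 = x2" using assms(2) H H' by simp
    have "0 \<le> sv v H''" using pos assms(2) H H' by (auto intro!: sum_list_nonneg simp: less_imp_le)
    then have "sv v H \<ge> v x1 + v x2" using H H' by simp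
    moreover have "v x1 > 1/2" using assms(9) assms(2) H by simp
    moreover have "v x2 > 1/2" using b2 \<open>xs ! 1 = x2\<close> by simp
    ultimately show False using assms(7,8) nnTl by linarith
  qed
  have x1: "hd xs = x1" using hdx H by simp
  have x1M: "x1 \<notin> set M" using dxs assms(2) H by auto
  have lc: "length c = 1 + length Tl" using assms(6) H H'e by simp
  have "card (Q \<inter> set M) \<le> card (Q - {x1})"
    apply (rule card_mono) using Q(1) x1M by auto
  also have "\<dots> = card Q - 1" using Q(1,2) x1 by simp
  finally have cQ: "card (Q \<inter> set M) \<le> card Q - 1" .
  have cQ1: "card Q \<ge> 1" using Q(1,2) by (metis card_0_eq empty_iff less_one not_le)
  show "card (Q \<inter> set M) + 1 \<le> length c"
  proof (cases "length c \<ge> k")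
    case True then show ?thesis using cQ cQ1 Q(3) by linarith
  next
    case False
    define t where "t = v (last M)"
    have cl2: "sv v c + t > 1" using False cl t_def by simp
    have tpos: "t > 0" using pos assms(2) Mne t_def by simp
    have sMT: "sorted_wrt (\<lambda>i j. v j \<le> v i) (M @ Tl)" using srt assms(2) by (simp add: sorted_wrt_append)
    have Tlt: "\<forall>z\<in>set Tl. v z \<le> t" using sMT Mne t_def by (simp add: sorted_wrt_append)
    have "sv v Tl \<le> sum_list (map (\<lambda>_. t) Tl)" by (rule sum_list_mono) (use Tlt in auto)
    also have "\<dots> = real (length Tl) * t" by (simp add: sum_list_triv)
    finally have svT: "sv v Tl \<le> real (length Tl) * t" .
    have Mge: "\<forall>y\<in>set M. t \<le> v y" using sorted_last_min[of v M] sMT Mne t_def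
      by (simp add: sorted_wrt_append)
    have "real (card (Q \<inter> set M)) * t \<le> sum v (Q \<inter> set M)"
      by (rule sum_bounded_below) (use Mge in auto)
    moreover have "v x1 + sum v (Q \<inter> set M) = sum v (insert x1 (Q \<inter> set M))"
      using x1M Q(1) by simp
    moreover have "sum v (insert x1 (Q \<inter> set M)) \<le> sum v Q"
      apply (rule sum_mono2) using Q x1 by auto
    ultimately have A: "v x1 + real (card (Q \<inter> set M)) * t \<le> 1" using Q(4) by linarith
    have B: "sv v c = v x1 + sv v Tl" using assms(7) H H'e by simp
    have "real (card (Q \<inter> set M)) * t < (real (length Tl) + 1) * t"
      using A B cl2 svT by (simp add: algebra_simps)
    then have "real (card (Q \<inter> set M)) < real (length Tl) + 1" using tpos by simp
    then show ?thesis using lc by linarith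
  qed
qed

primrec Rs :: "('a \<Rightarrow> real) \<Rightarrow> 'a list list \<Rightarrow> 'a set" where
  "Rs v [] = {}"
| "Rs v (c # bs) = (if (\<forall>i\<in>set c. v i \<le> 1/2) then set c else {}) \<union> Rs v bs"

primrec Ts :: "('a \<Rightarrow> real) \<Rightarrow> 'a list list \<Rightarrow> 'a set" where
  "Ts v [] = {}"
| "Ts v (c # bs) = (if (\<forall>i\<in>set c. v i \<le> 1/2) then {} else set c - {i. 1/2 < v i}) \<union> Ts v bs"

lemma G1:
  assumes "valid v xs" "xs \<noteq> []" "k \<ge> 3"
  shows "[] \<notin> set (mmg v k 0 [] xs) \<and> Rs v (mmg v k 0 [] xs) \<subseteq> set xs
    \<and> Ts v (mmg v k 0 [] xs) \<subseteq> set xs \<and> Rs v (mmg v k 0 [] xs) \<inter> Ts v (mmg v k 0 [] xs) = {}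
    \<and> (\<forall>i\<in>Rs v (mmg v k 0 [] xs). v i \<le> 1/2) \<and> (\<forall>i\<in>Ts v (mmg v k 0 [] xs). v i \<le> 1/2)"
  using assms
proof (induction "length xs" arbitrary: xs rule: less_induct)
  case less
  obtain H M Tl c where S: "xs = H @ M @ Tl" "H \<noteq> []" "set c = set H \<union> set Tl" "distinct c"
     "length c = length H + length Tl"
     "sv v c = sv v H + sv v Tl" "sv v c \<le> 1"
     "(length H \<ge> k \<or> M @ Tl = [] \<or> sv v H + v (hd (M @ Tl)) > 1)"
     "((M = [] \<and> Tl = [] \<and> mmg v k 0 [] xs = [c]) \<or>
        (M \<noteq> [] \<and> mmg v k 0 [] xs = c # mmg v k 0 [] M
         \<and> (length c \<ge> k \<or> (sv v c + v (hd M) > 1 \<and> sv v c + v (last M) > 1))))"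
    using step[OF less.prems] by blast
  have cne: "c \<noteq> []" using S(2,3) by auto
  have dxs: "distinct xs" using less.prems(1) unfolding valid_def by simp
  have dj: "set c \<inter> set M = {}" using dxs S(1,3) by auto
  show ?case
  proof (cases "M = []")
    case True
    then have e: "mmg v k 0 [] xs = [c]" using S(9) by simp
    show ?thesis unfolding e using cne S(1,3) by auto
  next
    case False
    then have e: "mmg v k 0 [] xs = c # mmg v k 0 [] M" using S(9) by simp
    have "length M < length xs" using S(1,2) by simp
    moreover have "valid v M" using valid_mid less.prems(1) S(1) by blast
    ultimately have IH: "[] \<notin> set (mmg v k 0 [] M) \<and> Rs v (mmg v k 0 [] M) \<subseteq> set M
    \<and> Ts v (mmg v k 0 [] M) \<subseteq> set M \<and> Rs v (mmg v k 0 [] M) \<inter> Ts v (mmg v k 0 [] M) = {}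
    \<and> (\<forall>i\<in>Rs v (mmg v k 0 [] M). v i \<le> 1/2) \<and> (\<forall>i\<in>Ts v (mmg v k 0 [] M). v i \<le> 1/2)"
      using less.hyps False less.prems(3) by blast
    show ?thesis unfolding e using IH cne dj S(1,3) by auto
  qed
qed

lemma G2:
  assumes "valid v xs" "xs \<noteq> []" "k \<ge> 3" "0 \<le> a" "0 \<le> b" "1 \<le> real k * a" "1 \<le> 2 * a + 2 * b / 3"
  shows "real (length (mmg v k 0 [] xs)) \<le> real (card {i\<in>set xs. 1/2 < v i})
           + (\<Sum>i\<in>Rs v (mmg v k 0 [] xs). a + b * v i) + 1"
  using assms
proof (induction "length xs" arbitrary: xs rule: less_induct)
  case less
  obtain H M Tl c where S: "xs = H @ M @ Tl" "H \<noteq> []" "set c = set H \<union> set Tl" "distinct c"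
     "length c = length H + length Tl"
     "sv v c = sv v H + sv v Tl" "sv v c \<le> 1"
     "(length H \<ge> k \<or> M @ Tl = [] \<or> sv v H + v (hd (M @ Tl)) > 1)"
     "((M = [] \<and> Tl = [] \<and> mmg v k 0 [] xs = [c]) \<or>
        (M \<noteq> [] \<and> mmg v k 0 [] xs = c # mmg v k 0 [] M
         \<and> (length c \<ge> k \<or> (sv v c + v (hd M) > 1 \<and> sv v c + v (last M) > 1))))"
    using step[OF less.prems(1-3)] by blast
  have dxs: "distinct xs" and pos: "\<forall>i\<in>set xs. 0 < v i \<and> v i \<le> 1"
    using less.prems(1) unfolding valid_def by auto
  have dj: "set c \<inter> set M = {}" using dxs S(1,3) by auto
  have G1x: "Rs v (mmg v k 0 [] xs) \<subseteq> set xs" using G1[OF less.prems(1-3)] by blast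
  have nn: "0 \<le> (\<Sum>i\<in>Rs v (mmg v k 0 [] xs). a + b * v i)"
    apply (rule sum_nonneg) using G1x pos less.prems(4,5) by (auto intro!: add_nonneg_nonneg mult_nonneg_nonneg simp: less_imp_le)
  show ?case
  proof (cases "M = []")
    case True
    then have e: "mmg v k 0 [] xs = [c]" using S(9) by simp
    show ?thesis using nn unfolding e by simp
  next
    case False
    then have e: "mmg v k 0 [] xs = c # mmg v k 0 [] M"
      and cl: "length c \<ge> k \<or> (sv v c + v (hd M) > 1 \<and> sv v c + v (last M) > 1)" using S(9) by auto
    have "length M < length xs" using S(1,2) by simp
    moreover have vM: "valid v M" using valid_mid less.prems(1) S(1) by blast
    ultimately have IH: "real (length (mmg v k 0 [] M)) \<le> real (card {i\<in>set M. 1/2 < v i})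
           + (\<Sum>i\<in>Rs v (mmg v k 0 [] M). a + b * v i) + 1"
      using less.hyps False less.prems(3-7) by blast
    have RM: "Rs v (mmg v k 0 [] M) \<subseteq> set M" using G1[OF vM False less.prems(3)] by blast
    have fin: "finite {i\<in>set xs. 1/2 < v i}" by simp
    have sub: "{i\<in>set M. 1/2 < v i} \<subseteq> {i\<in>set xs. 1/2 < v i}" using S(1) by auto
    show ?thesis
    proof (cases "v (hd xs) \<le> 1/2")
      case True
      have srt: "sorted_wrt (\<lambda>i j. v j \<le> v i) xs" using less.prems(1) unfolding valid_def by simp
      have small: "\<forall>i\<in>set xs. v i \<le> 1/2" using sorted_hd_max[OF srt less.prems(2)] True by fastforce
      then have cB: "\<forall>i\<in>set c. v i \<le> 1/2" using S(1,3) by auto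
      have "\<forall>i\<in>set M. v i \<le> 1/2" using small S(1) by simp
      then have BM: "{i\<in>set M. 1/2 < v i} = {}" by (auto simp: not_less[symmetric])
      have Rs_e: "Rs v (mmg v k 0 [] xs) = set c \<union> Rs v (mmg v k 0 [] M)" unfolding e Rs.simps if_P[OF cB] by simp
      have djR: "set c \<inter> Rs v (mmg v k 0 [] M) = {}" using dj RM by auto
      have sumc: "(\<Sum>i\<in>set c. a + b * v i) = a * real (length c) + b * sv v c"
        using S(4) by (simp add: sum.distrib sum_distrib_left[symmetric] sum_list_distinct_conv_sum_set distinct_card)
      have bc: "length c \<ge> k \<or> (length c \<ge> 2 \<and> sv v c > 2/3)"
        using bin_nonB[OF less.prems(1) S(1) S(2) False less.prems(3) S(8) cl S(6) S(5) True] .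
      have svnn: "0 \<le> sv v c" using pos S(1,3) by (auto intro!: sum_list_nonneg simp: less_imp_le)
      have "1 \<le> a * real (length c) + b * sv v c"
      proof (cases "length c \<ge> k")
        case True
        then have "real k * a \<le> a * real (length c)" using less.prems(4) by (simp add: mult.commute mult_left_mono)
        then show ?thesis using less.prems(5,6) svnn by (smt (verit) mult_nonneg_nonneg)
      next
        case False
        then have "length c \<ge> 2" "sv v c > 2/3" using bc by auto
        have "2 * a \<le> a * real (length c)" using \<open>length c \<ge> 2\<close> less.prems(4)
          by (simp add: mult.commute mult_left_mono)
        moreover have "b * (2/3) \<le> b * sv v c" using \<open>sv v c > 2/3\<close> less.prems(5)
          by (intro mult_left_mono) auto
        ultimately show ?thesis using less.prems(7) by linarith
      qed
      then have "real (length (mmg v k 0 [] xs)) \<le> real (card {i\<in>set M. 1/2 < v i})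
           + (\<Sum>i\<in>set c. a + b * v i) + (\<Sum>i\<in>Rs v (mmg v k 0 [] M). a + b * v i) + 1"
        using IH e sumc by simp
      also have "\<dots> = real (card {i\<in>set M. 1/2 < v i}) + (\<Sum>i\<in>Rs v (mmg v k 0 [] xs). a + b * v i) + 1"
        unfolding Rs_e by (subst sum.union_disjoint) (use djR finite_subset[OF RM] in auto)
      also have "\<dots> \<le> real (card {i\<in>set xs. 1/2 < v i}) + (\<Sum>i\<in>Rs v (mmg v k 0 [] xs). a + b * v i) + 1"
        using card_mono[OF fin sub] by simp
      finally show ?thesis .
    next
      case False2: False
      have hc: "hd xs \<in> set c" using bin_B(1)[OF less.prems(1) S(1-7)] False2 by simp
      have cB: "\<not> (\<forall>i\<in>set c. v i \<le> 1/2)" using hc False2 by auto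
      have Rs_e: "Rs v (mmg v k 0 [] xs) = Rs v (mmg v k 0 [] M)" unfolding e Rs.simps if_not_P[OF cB] by simp
      have "hd xs \<notin> set M" using hc dj by auto
      then have sub2: "insert (hd xs) {i\<in>set M. 1/2 < v i} \<subseteq> {i\<in>set xs. 1/2 < v i}"
        using sub False2 less.prems(2) by auto
      have "card (insert (hd xs) {i\<in>set M. 1/2 < v i}) = card {i\<in>set M. 1/2 < v i} + 1"
        using \<open>hd xs \<notin> set M\<close> by simp
      then have "card {i\<in>set M. 1/2 < v i} + 1 \<le> card {i\<in>set xs. 1/2 < v i}"
        using card_mono[OF fin sub2] by simp
      then show ?thesis using IH e Rs_e by simp
    qed
  qed
qed

lemma G3:
  assumes "valid v xs" "xs \<noteq> []" "k \<ge> 3"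
    "\<forall>j\<in>set xs. j \<in> Qs j \<and> finite (Qs j) \<and> card (Qs j) \<le> k \<and> sum v (Qs j) \<le> 1 \<and> (\<forall>i\<in>Qs j. 0 \<le> v i)"
  shows "(\<Sum>j\<in>{i\<in>set xs. 1/2 < v i}. card (Qs j \<inter> Rs v (mmg v k 0 [] xs)))
           \<le> card (Ts v (mmg v k 0 [] xs)) + (k - 1)"
  using assms
proof (induction "length xs" arbitrary: xs rule: less_induct)
  case less
  obtain H M Tl c where S: "xs = H @ M @ Tl" "H \<noteq> []" "set c = set H \<union> set Tl" "distinct c"
     "length c = length H + length Tl"
     "sv v c = sv v H + sv v Tl" "sv v c \<le> 1"
     "(length H \<ge> k \<or> M @ Tl = [] \<or> sv v H + v (hd (M @ Tl)) > 1)"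
     "((M = [] \<and> Tl = [] \<and> mmg v k 0 [] xs = [c]) \<or>
        (M \<noteq> [] \<and> mmg v k 0 [] xs = c # mmg v k 0 [] M
         \<and> (length c \<ge> k \<or> (sv v c + v (hd M) > 1 \<and> sv v c + v (last M) > 1))))"
    using step[OF less.prems(1-3)] by blast
  have dxs: "distinct xs" and pos: "\<forall>i\<in>set xs. 0 < v i \<and> v i \<le> 1"
    and srt: "sorted_wrt (\<lambda>i j. v j \<le> v i) xs"
    using less.prems(1) unfolding valid_def by auto
  have dj: "set c \<inter> set M = {}" using dxs S(1,3) by auto
  have G1x: "\<forall>i\<in>Rs v (mmg v k 0 [] xs). v i \<le> 1/2" using G1[OF less.prems(1-3)] by blast
  show ?case
  proof (cases "v (hd xs) \<le> 1/2")
    case True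
    have small: "\<forall>i\<in>set xs. v i \<le> 1/2" using sorted_hd_max[OF srt less.prems(2)] True by fastforce
    then have E: "{i\<in>set xs. 1/2 < v i} = {}" by (auto simp: not_less[symmetric])
    show ?thesis unfolding E by simp
  next
    case False
    define x1 where "x1 = hd xs"
    have x1B: "1/2 < v x1" using False x1_def by simp
    have hB: "1/2 < v (hd xs)" using False by simp
    have x1xs: "x1 \<in> set xs" using less.prems(2) x1_def by simp
    have Qx1: "x1 \<in> Qs x1" "finite (Qs x1)" "card (Qs x1) \<le> k" "sum v (Qs x1) \<le> 1" "\<forall>i\<in>Qs x1. 0 \<le> v i"
      using less.prems(4) x1xs by auto
    have hc: "x1 \<in> set c" using bin_B(1)[OF less.prems(1) S(1-7)] False x1_def by simp
    have oth: "\<forall>i\<in>set c. i \<noteq> x1 \<longrightarrow> v i < 1/2" using bin_B(2)[OF less.prems(1) S(1-7)] False x1_def by simp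
    have cB: "\<not> (\<forall>i\<in>set c. v i \<le> 1/2)"
    proof
      assume "\<forall>i\<in>set c. v i \<le> 1/2"
      then have "v x1 \<le> 1/2" using hc by blast
      then show False using x1B by simp
    qed
    have gen: "card (Qs x1 \<inter> Rs v (mmg v k 0 [] xs)) \<le> k - 1"
    proof -
      have "x1 \<notin> Rs v (mmg v k 0 [] xs)" using G1x x1B by auto
      then have "card (Qs x1 \<inter> Rs v (mmg v k 0 [] xs)) \<le> card (Qs x1 - {x1})"
        by (intro card_mono) (use Qx1 in auto)
      also have "\<dots> = card (Qs x1) - 1" using Qx1 by simp
      finally show ?thesis using Qx1(3) by linarith
    qed
    show ?thesis
    proof (cases "length xs \<ge> 2 \<and> v (xs ! 1) > 1/2 \<and> M \<noteq> []")
      case True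
      then have Mne: "M \<noteq> []" and l2: "length xs \<ge> 2" and b2: "v (xs ! 1) > 1/2" by auto
      then have e: "mmg v k 0 [] xs = c # mmg v k 0 [] M"
        and cl: "length c \<ge> k \<or> (sv v c + v (hd M) > 1 \<and> sv v c + v (last M) > 1)" using S(9) by auto
      have "length M < length xs" using S(1,2) by simp
      moreover have vM: "valid v M" using valid_mid less.prems(1) S(1) by blast
      moreover have "\<forall>j\<in>set M. j \<in> Qs j \<and> finite (Qs j) \<and> card (Qs j) \<le> k \<and> sum v (Qs j) \<le> 1 \<and> (\<forall>i\<in>Qs j. 0 \<le> v i)"
        using less.prems(4) S(1) by auto
      ultimately have IH: "(\<Sum>j\<in>{i\<in>set M. 1/2 < v i}. card (Qs j \<inter> Rs v (mmg v k 0 [] M)))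
           \<le> card (Ts v (mmg v k 0 [] M)) + (k - 1)"
        using less.hyps Mne less.prems(3) by blast
      have G1M: "Rs v (mmg v k 0 [] M) \<subseteq> set M" "Ts v (mmg v k 0 [] M) \<subseteq> set M"
        using G1[OF vM Mne less.prems(3)] by auto
      have Rs_e: "Rs v (mmg v k 0 [] xs) = Rs v (mmg v k 0 [] M)" unfolding e Rs.simps if_not_P[OF cB] by simp
      have Ts_e: "Ts v (mmg v k 0 [] xs) = (set c - {i. 1/2 < v i}) \<union> Ts v (mmg v k 0 [] M)"
        unfolding e Ts.simps if_not_P[OF cB] by simp
      have cdiff: "set c - {i. 1/2 < v i} = set c - {x1}" using oth x1B by force
      have card_c: "card (set c - {i. 1/2 < v i}) = length c - 1"
        unfolding cdiff using hc S(4) by (simp add: distinct_card)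
      have card_T: "card (Ts v (mmg v k 0 [] xs)) = (length c - 1) + card (Ts v (mmg v k 0 [] M))"
        unfolding Ts_e card_c[symmetric]
        by (rule card_Un_disjoint) (use dj G1M finite_subset[OF G1M(2)] in auto)
      have Bset: "{i\<in>set xs. 1/2 < v i} = insert x1 {i\<in>set M. 1/2 < v i}"
      proof
        show "{i\<in>set xs. 1/2 < v i} \<subseteq> insert x1 {i\<in>set M. 1/2 < v i}"
        proof
          fix i assume i: "i \<in> {i\<in>set xs. 1/2 < v i}"
          show "i \<in> insert x1 {i\<in>set M. 1/2 < v i}"
          proof (cases "i \<in> set M")
            case True then show ?thesis using i by simp
          next
            case False
            then have "i \<in> set c" using i S(1,3) by auto
            then have "i = x1" using oth i by force
            then show ?thesis by simp
          qed
        qed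
        show "insert x1 {i\<in>set M. 1/2 < v i} \<subseteq> {i\<in>set xs. 1/2 < v i}" using x1B x1xs S(1) by auto
      qed
      have x1M: "x1 \<notin> set M" using hc dj by auto
      have hdQ: "hd xs \<in> Qs x1" using Qx1(1) x1_def by simp
      have "card (Qs x1 \<inter> Rs v (mmg v k 0 [] M)) \<le> card (Qs x1 \<inter> set M)"
        by (intro card_mono) (use Qx1 G1M in auto)
      also have "\<dots> + 1 \<le> length c"
        using bin_B(3)[OF less.prems(1) S(1-7) hB l2 b2 Mne cl Qx1(2) hdQ Qx1(3-5)] by simp
      finally have c1: "card (Qs x1 \<inter> Rs v (mmg v k 0 [] M)) + 1 \<le> length c" by simp
      have "(\<Sum>j\<in>{i\<in>set xs. 1/2 < v i}. card (Qs j \<inter> Rs v (mmg v k 0 [] xs)))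
          = card (Qs x1 \<inter> Rs v (mmg v k 0 [] M)) + (\<Sum>j\<in>{i\<in>set M. 1/2 < v i}. card (Qs j \<inter> Rs v (mmg v k 0 [] M)))"
        unfolding Bset Rs_e using x1M by simp
      then show ?thesis using IH c1 card_T by linarith
    next
      case False3: False
      show ?thesis
      proof (cases "M = []")
        case True
        then have e: "mmg v k 0 [] xs = [c]" using S(9) by simp
        have "Rs v (mmg v k 0 [] xs) = {}" unfolding e Rs.simps if_not_P[OF cB] by simp
        then show ?thesis by simp
      next
        case Mne: False
        have "\<not> (length xs \<ge> 2 \<and> v (xs ! 1) > 1/2)" using False3 Mne by simp
        have Bset: "{i\<in>set xs. 1/2 < v i} = {x1}"
        proof (cases "length xs \<ge> 2")
          case True
          then obtain y1 y2 ys where xs: "xs = y1 # y2 # ys" by (cases xs; cases "tl xs") auto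
          have "v y2 \<le> 1/2" using \<open>\<not> (length xs \<ge> 2 \<and> v (xs ! 1) > 1/2)\<close> True xs by simp
          moreover have "\<forall>i\<in>set (y2 # ys). v i \<le> v y2"
            using sorted_hd_max[of v "y2 # ys"] srt xs by simp
          ultimately have "\<forall>i\<in>set (y2 # ys). v i \<le> 1/2" by fastforce
          then show ?thesis using xs x1_def x1B by (auto simp: not_less[symmetric])
        next
          case False
          then obtain y1 where "xs = [y1]" using less.prems(2) by (cases xs; cases "tl xs") auto
          then show ?thesis using x1_def x1B by auto
        qed
        show ?thesis unfolding Bset using gen by simp
      qed
    qed
  qed
qed

lemma counting:
  fixes v :: "nat \<Rightarrow> real" and f :: "nat \<Rightarrow> nat" and a b :: real
  assumes N: "finite N" and RN: "R \<subseteq> N" and TN: "T \<subseteq> N" and RT: "R \<inter> T = {}"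
    and Rs: "\<forall>i\<in>R. v i \<le> 1/2" and Ts: "\<forall>i\<in>T. v i \<le> 1/2" and pos: "\<forall>i\<in>N. 0 < v i"
    and feas: "\<forall>p. card {i\<in>N. f i = p} \<le> k \<and> sum v {i\<in>N. f i = p} \<le> 1"
    and Bs: "Bs = {i\<in>N. 1/2 < v i}"
    and hyp: "(\<Sum>j\<in>Bs. card ({i\<in>N. f i = f j} \<inter> R)) \<le> card T + (k - 1)"
    and a: "0 \<le> a" and b: "0 \<le> b" and k: "k \<ge> 1"
  shows "(\<Sum>i\<in>R. a + b * v i) \<le> (real k * a + b) * real (card (f ` N - f ` Bs))
          + (a * (real k - 1) / 2 + b / 2) * real (card Bs) + a * (real k - 1) / 2"
    and "real (card (f ` N - f ` Bs)) = real (card (f ` N)) - real (card Bs)"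
proof -
  define U where "U i = a + b * v i" for i
  define P where "P = f ` N - f ` Bs"
  define RP where "RP p = {i\<in>R. f i = p}" for p
  define TP where "TP p = {i\<in>T. f i = p}" for p
  define C where "C p = {i\<in>N. f i = p}" for p
  have finR: "finite R" using N RN finite_subset by blast
  have finT: "finite T" using N TN finite_subset by blast
  have BsN: "Bs \<subseteq> N" using Bs by auto
  have finBs: "finite Bs" using N BsN finite_subset by blast
  have finC: "finite (C p)" for p using N unfolding C_def by simp
  have finRPp: "finite (RP p)" for p using finR unfolding RP_def by simp
  have finTPp: "finite (TP p)" for p using finT unfolding TP_def by simp
  have Unn: "0 \<le> U i" if "i \<in> N" for i using pos that a b unfolding U_def by (simp add: less_imp_le)
  have inj: "inj_on f Bs"
  proof (rule inj_onI)
    fix i j assume ij: "i \<in> Bs" "j \<in> Bs" "f i = f j"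
    show "i = j"
    proof (rule ccontr)
      assume "i \<noteq> j"
      have "sum v {i, j} \<le> sum v (C (f i))"
        apply (rule sum_mono2[OF finC]) using ij BsN pos unfolding C_def by (auto simp: less_imp_le)
      moreover have "sum v {i, j} = v i + v j" using \<open>i \<noteq> j\<close> by simp
      moreover have "sum v (C (f i)) \<le> 1" using feas unfolding C_def by blast
      ultimately have "v i + v j \<le> 1" by linarith
      then show False using ij Bs by simp
    qed
  qed
  have fN: "f ` N = P \<union> f ` Bs" "P \<inter> f ` Bs = {}" using BsN unfolding P_def by auto
  have finP: "finite P" using N unfolding P_def by simp
  have sumR: "(\<Sum>i\<in>R. U i) = (\<Sum>p\<in>P. sum U (RP p)) + (\<Sum>j\<in>Bs. sum U (RP (f j)))"
  proof -
    have "(\<Sum>i\<in>R. U i) = (\<Sum>p\<in>f ` N. sum U (RP p))"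
      unfolding RP_def by (rule sum.group[symmetric]) (use finR N RN in auto)
    also have "\<dots> = (\<Sum>p\<in>P. sum U (RP p)) + (\<Sum>p\<in>f ` Bs. sum U (RP p))"
      unfolding fN(1) by (rule sum.union_disjoint) (use finP finBs fN(2) in auto)
    also have "(\<Sum>p\<in>f ` Bs. sum U (RP p)) = (\<Sum>j\<in>Bs. sum U (RP (f j)))"
      by (rule sum.reindex[OF inj, unfolded comp_def])
    finally show ?thesis .
  qed
  have cardT: "real (card T) = (\<Sum>p\<in>P. real (card (TP p))) + (\<Sum>j\<in>Bs. real (card (TP (f j))))"
  proof -
    have "real (card T) = (\<Sum>i\<in>T. 1)" by simp
    also have "\<dots> = (\<Sum>p\<in>f ` N. (\<Sum>i\<in>TP p. 1))"
      unfolding TP_def by (rule sum.group[symmetric]) (use finT N TN in auto)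
    also have "\<dots> = (\<Sum>p\<in>P. (\<Sum>i\<in>TP p. 1)) + (\<Sum>p\<in>f ` Bs. (\<Sum>i\<in>TP p. 1))"
      unfolding fN(1) by (rule sum.union_disjoint) (use finP finBs fN(2) in auto)
    also have "(\<Sum>p\<in>f ` Bs. (\<Sum>i\<in>TP p. 1)) = (\<Sum>j\<in>Bs. (\<Sum>i\<in>TP (f j). 1::real))"
      by (rule sum.reindex[OF inj, unfolded comp_def])
    finally show ?thesis by simp
  qed
  have perP: "sum U (RP p) + sum U (TP p) \<le> real k * a + b" for p
  proof -
    have d: "RP p \<inter> TP p = {}" using RT unfolding RP_def TP_def by auto
    have sub: "RP p \<union> TP p \<subseteq> C p" using RN TN unfolding RP_def TP_def C_def by auto
    have "sum U (RP p) + sum U (TP p) = sum U (RP p \<union> TP p)"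
      by (rule sum.union_disjoint[symmetric]) (use d finRPp finTPp in auto)
    also have "\<dots> \<le> sum U (C p)"
      by (rule sum_mono2[OF finC sub]) (use Unn in \<open>auto simp: C_def\<close>)
    also have "\<dots> = a * real (card (C p)) + b * sum v (C p)"
      unfolding U_def by (simp add: sum.distrib sum_distrib_left mult.commute)
    also have "\<dots> \<le> a * real k + b * 1"
    proof (rule add_mono)
      show "a * real (card (C p)) \<le> a * real k" using feas a unfolding C_def by (auto intro: mult_left_mono)
      have "sum v (C p) \<le> 1" using feas unfolding C_def by blast
      then show "b * sum v (C p) \<le> b * 1" using b by (rule mult_left_mono)
    qed
    finally show ?thesis by (simp add: mult.commute)
  qed
  have TPa: "a * real (card (TP p)) \<le> sum U (TP p)" for p
  proof -
    have "a * real (card (TP p)) = (\<Sum>i\<in>TP p. a)" by simp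
    also have "\<dots> \<le> sum U (TP p)"
      by (rule sum_mono) (use pos TN b in \<open>auto simp: U_def TP_def less_imp_le\<close>)
    finally show ?thesis .
  qed
  have perB: "sum U (RP (f j)) \<le> a * real (card (RP (f j))) + b / 2"
    and roj: "card (RP (f j)) + card (TP (f j)) \<le> k - 1" if j: "j \<in> Bs" for j
  proof -
    have jN: "j \<in> N" and vj: "1/2 < v j" using j Bs by auto
    have finRP: "finite (RP (f j))" using finR unfolding RP_def by simp
    have "sum v (insert j (RP (f j))) \<le> sum v (C (f j))"
      apply (rule sum_mono2[OF finC]) using jN RN pos unfolding RP_def C_def by (auto simp: less_imp_le)
    moreover have "j \<notin> RP (f j)" using Rs vj unfolding RP_def by auto
    moreover have "sum v (insert j (RP (f j))) = v j + sum v (RP (f j))" using finRP \<open>j \<notin> RP (f j)\<close> by simp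
    moreover have "sum v (C (f j)) \<le> 1" using feas unfolding C_def by blast
    ultimately have "v j + sum v (RP (f j)) \<le> 1" by linarith
    then have sv: "sum v (RP (f j)) \<le> 1/2" using vj by simp
    have "sum U (RP (f j)) = a * real (card (RP (f j))) + b * sum v (RP (f j))"
      unfolding U_def by (simp add: sum.distrib sum_distrib_left mult.commute)
    also have "\<dots> \<le> a * real (card (RP (f j))) + b * (1/2)"
      using sv b by (intro add_left_mono mult_left_mono) auto
    finally show "sum U (RP (f j)) \<le> a * real (card (RP (f j))) + b / 2" by simp
    have d: "RP (f j) \<inter> TP (f j) = {}" using RT unfolding RP_def TP_def by auto
    have sub: "RP (f j) \<union> TP (f j) \<subseteq> C (f j) - {j}" using RN TN Rs Ts vj unfolding RP_def TP_def C_def by force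
    have "card (RP (f j)) + card (TP (f j)) = card (RP (f j) \<union> TP (f j))"
      by (rule card_Un_disjoint[symmetric]) (use d finRPp finTPp in auto)
    also have "\<dots> \<le> card (C (f j) - {j})" by (rule card_mono) (use finC sub in auto)
    also have "\<dots> = card (C (f j)) - 1" using jN unfolding C_def by simp
    also have "\<dots> \<le> k - 1" using feas unfolding C_def by (simp add: diff_le_mono)
    finally show "card (RP (f j)) + card (TP (f j)) \<le> k - 1" .
  qed
  have RPeq: "{i\<in>N. f i = f j} \<inter> R = RP (f j)" for j using RN unfolding RP_def by auto
  have hyp': "(\<Sum>j\<in>Bs. real (card (RP (f j)))) \<le> real (card T) + (real k - 1)"
  proof -
    have "(\<Sum>j\<in>Bs. card (RP (f j))) \<le> card T + (k - 1)" using hyp RPeq by simp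
    then have "real (\<Sum>j\<in>Bs. card (RP (f j))) \<le> real (card T + (k - 1))" by linarith
    then show ?thesis using k by (simp add: of_nat_diff)
  qed
  have sumRO: "(\<Sum>j\<in>Bs. real (card (RP (f j)))) + (\<Sum>j\<in>Bs. real (card (TP (f j)))) \<le> (real k - 1) * real (card Bs)"
  proof -
    have "(\<Sum>j\<in>Bs. real (card (RP (f j)))) + (\<Sum>j\<in>Bs. real (card (TP (f j))))
        = (\<Sum>j\<in>Bs. real (card (RP (f j)) + card (TP (f j))))" by (simp add: sum.distrib)
    also have "\<dots> \<le> (\<Sum>j\<in>Bs. real k - 1)"
      apply (rule sum_mono) using roj k by (smt (verit) of_nat_add of_nat_diff of_nat_le_iff of_nat_1)
    also have "\<dots> = (real k - 1) * real (card Bs)" by simp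
    finally show ?thesis .
  qed
  have S1: "(\<Sum>p\<in>P. sum U (RP p)) + (\<Sum>p\<in>P. sum U (TP p)) \<le> (real k * a + b) * real (card P)"
  proof -
    have "(\<Sum>p\<in>P. sum U (RP p)) + (\<Sum>p\<in>P. sum U (TP p)) = (\<Sum>p\<in>P. sum U (RP p) + sum U (TP p))"
      by (simp add: sum.distrib)
    also have "\<dots> \<le> (\<Sum>p\<in>P. real k * a + b)" by (rule sum_mono) (use perP in auto)
    finally show ?thesis by (simp add: mult.commute)
  qed
  have S2: "a * (\<Sum>p\<in>P. real (card (TP p))) \<le> (\<Sum>p\<in>P. sum U (TP p))"
    unfolding sum_distrib_left by (rule sum_mono) (use TPa in auto)
  have S3: "(\<Sum>j\<in>Bs. sum U (RP (f j))) \<le> a * (\<Sum>j\<in>Bs. real (card (RP (f j)))) + b / 2 * real (card Bs)"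
  proof -
    have "(\<Sum>j\<in>Bs. sum U (RP (f j))) \<le> (\<Sum>j\<in>Bs. a * real (card (RP (f j))) + b / 2)"
      by (rule sum_mono) (use perB in auto)
    also have "\<dots> = a * (\<Sum>j\<in>Bs. real (card (RP (f j)))) + b / 2 * real (card Bs)"
      by (simp add: sum.distrib sum_distrib_left)
    finally show ?thesis .
  qed
  define sr where "sr = (\<Sum>j\<in>Bs. real (card (RP (f j))))"
  define so where "so = (\<Sum>j\<in>Bs. real (card (TP (f j))))"
  define cP where "cP = (\<Sum>p\<in>P. real (card (TP p)))"
  have cPnn: "0 \<le> cP" unfolding cP_def by (simp add: sum_nonneg)
  have "a * sr \<le> a * ((real k - 1) * real (card Bs) - so + cP + so + (real k - 1)) / 2"
  proof -
    have "2 * sr \<le> (real k - 1) * real (card Bs) - so + cP + so + (real k - 1)"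
      using sumRO hyp' cardT unfolding sr_def so_def cP_def by linarith
    then have "a * (2 * sr) \<le> a * ((real k - 1) * real (card Bs) - so + cP + so + (real k - 1))"
      using a by (rule mult_left_mono)
    then show ?thesis by simp
  qed
  moreover have "a * ((real k - 1) * real (card Bs) - so + cP + so + (real k - 1)) / 2
     = a * (real k - 1) * real (card Bs) / 2 + a * cP / 2 + a * (real k - 1) / 2"
    by (simp add: field_simps)
  ultimately have "a * sr \<le> a * (real k - 1) * real (card Bs) / 2 + a * cP / 2 + a * (real k - 1) / 2"
    by linarith
  moreover have "(\<Sum>i\<in>R. U i) \<le> (real k * a + b) * real (card P) - a * cP + a * sr + b / 2 * real (card Bs)"
    using sumR S1 S2 S3 unfolding sr_def cP_def by linarith
  moreover have "0 \<le> a * cP" using a cPnn by simp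
  ultimately have "(\<Sum>i\<in>R. U i) \<le> (real k * a + b) * real (card P)
     + (a * (real k - 1) / 2 + b / 2) * real (card Bs) + a * (real k - 1) / 2"
    by (simp add: algebra_simps)
  then show "(\<Sum>i\<in>R. a + b * v i) \<le> (real k * a + b) * real (card (f ` N - f ` Bs))
          + (a * (real k - 1) / 2 + b / 2) * real (card Bs) + a * (real k - 1) / 2" unfolding U_def P_def .
  have "card (f ` N - f ` Bs) = card (f ` N) - card (f ` Bs)"
    by (rule card_Diff_subset) (use finBs BsN in auto)
  moreover have "card (f ` Bs) = card Bs" by (rule card_image[OF inj])
  moreover have "card (f ` Bs) \<le> card (f ` N)" by (rule card_mono) (use N BsN in auto)
  ultimately show "real (card (f ` N - f ` Bs)) = real (card (f ` N)) - real (card Bs)" by simp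
qed

lemma lambda_bound:
  assumes "k \<ge> 3"
  shows "lambda_seq k \<ge> 3/2 + (real k - 2) / real k"
proof -
  define g where "g i = max (1 / (real (pi_seq i) - 1)) (1 / real k)" for i
  have p1: "pi_seq 1 = 2" by (simp add: pi_seq_def)
  have p2: "pi_seq 2 = 3" by (simp add: pi_seq_def numeral_2_eq_2)
  have g1: "g 1 = 1" using assms unfolding g_def p1 by (simp add: max_def)
  have g2: "g 2 \<ge> 1/2" unfolding g_def p2 by simp
  have g3: "g i \<ge> 1 / real k" for i unfolding g_def by simp
  have set: "{1..k} = insert 1 (insert 2 {3..k})" using assms by auto
  have "lambda_seq k = sum g {1..k}" unfolding lambda_seq_def g_def by simp
  also have "\<dots> = g 1 + g 2 + sum g {3..k}" unfolding set by simp
  finally have L: "lambda_seq k = g 1 + g 2 + sum g {3..k}" .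
  have "sum g {3..k} \<ge> (\<Sum>i\<in>{3..k}. 1 / real k)" by (rule sum_mono) (use g3 in auto)
  also have "(\<Sum>i\<in>{3..k}. 1 / real k) = real (k - 2) / real k" by simp
  also have "real (k - 2) = real k - 2" using assms by simp
  finally show ?thesis using L g1 g2 by linarith
qed

lemma map_sort_key_nth:
  fixes I :: "real list"
  shows "map (\<lambda>i. I ! i) (sort_key (\<lambda>i. I ! i) [0..<length I]) = sort I"
proof -
  have "sort (map (\<lambda>i. I ! i) [0..<length I]) = map (\<lambda>i. I ! i) (sort_key (\<lambda>i. I ! i) [0..<length I])"
    by (rule properties_for_sort) (simp_all add: mset_map)
  moreover have "map (\<lambda>i. I ! i) [0..<length I] = I" by (simp add: map_nth)
  ultimately show ?thesis by simp
qed

lemma main_param: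
  fixes k :: nat and I :: "real list" and a b :: real
  assumes k3: "k \<ge> 3" and items: "\<forall>x\<in>set I. 0 < x \<and> x \<le> 1"
    and a: "0 \<le> a" and b: "0 \<le> b" and c1: "1 \<le> real k * a" and c2: "1 \<le> 2 * a + 2 * b / 3"
    and c3: "1 + a * (real k - 1) / 2 + b / 2 \<le> real k * a + b"
  shows "real (MM k I) \<le> (real k * a + b) * real (OPT k I) + a * (real k - 1) / 2 + 1"
proof -
  define n where "n = length I"
  define v where "v i = I ! i" for i
  define N where "N = {..<n}"
  define \<pi> where "\<pi> = rev (sort_key v [0..<n])"
  have mapv: "map v \<pi> = rev (sort I)"
    unfolding \<pi>_def v_def n_def using map_sort_key_nth[of I] by (simp only: rev_map[symmetric])
  have setpi: "set \<pi> = N" unfolding \<pi>_def N_def by auto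
  have dpi: "distinct \<pi>" unfolding \<pi>_def by simp
  have vpos: "\<forall>i\<in>N. 0 < v i \<and> v i \<le> 1" using items unfolding N_def v_def n_def by auto
  have srt0: "sorted (map v (sort_key v [0..<n]))" by simp
  then have "sorted_wrt (\<lambda>i j. v i \<le> v j) (sort_key v [0..<n])" by (simp add: sorted_wrt_map)
  then have srt: "sorted_wrt (\<lambda>i j. v j \<le> v i) \<pi>" unfolding \<pi>_def by (simp add: sorted_wrt_rev)
  have vpi: "valid v \<pi>" unfolding valid_def using srt dpi vpos setpi by auto
  have MMe: "MM k I = length (filter (\<lambda>b. b \<noteq> []) (mmg v k 0 [] \<pi>))"
  proof -
    have "mm_aux k 0 [] (rev (sort I)) = map (map v) (mmg v k 0 [] \<pi>)"
      using mm_aux_mmg[of k 0 v "[]" \<pi>] mapv by simp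
    then show ?thesis unfolding MM_def by (simp add: filter_map comp_def)
  qed
  have ex: "\<exists>m. \<exists>f. feasible_packing k I f \<and> used_bins I f = m"
  proof (intro exI conjI)
    show "feasible_packing k I id"
      unfolding feasible_packing_def
    proof
      fix bb
      have e: "{i. i < length I \<and> id i = bb} = (if bb < length I then {bb} else {})" by auto
      show "card {i. i < length I \<and> id i = bb} \<le> k \<and> (\<Sum>i\<in>{i. i < length I \<and> id i = bb}. I ! i) \<le> 1"
        unfolding e using k3 items by (auto simp: nth_mem)
    qed
  qed simp
  obtain f where f: "feasible_packing k I f" "used_bins I f = OPT k I"
    using LeastI_ex[OF ex] unfolding OPT_def by blast
  have Ceq: "{i. i < length I \<and> f i = p} = {i\<in>N. f i = p}" for p unfolding N_def n_def by auto
  have feas: "\<forall>p. card {i\<in>N. f i = p} \<le> k \<and> sum v {i\<in>N. f i = p} \<le> 1"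
    using f(1) unfolding feasible_packing_def Ceq v_def by simp
  have OPTe: "OPT k I = card (f ` N)" using f(2) unfolding used_bins_def N_def n_def lessThan_def by simp
  define Bs where "Bs = {i\<in>N. 1/2 < v i}"
  show ?thesis
  proof (cases "n = 0")
    case True
    then have "\<pi> = []" unfolding \<pi>_def by simp
    then have "MM k I = 0" using MMe by (simp add: mmg.simps(1))
    moreover have "0 \<le> (real k * a + b) * real (OPT k I) + a * (real k - 1) / 2 + 1"
    proof -
      have "0 \<le> real k * a + b" using a b by simp
      moreover have "0 \<le> a * (real k - 1) / 2" using a k3 by simp
      ultimately show ?thesis by (simp add: add_nonneg_nonneg)
    qed
    ultimately show ?thesis by simp
  next
    case False
    then have "0 \<in> N" unfolding N_def by simp
    then have pine: "\<pi> \<noteq> []" using setpi by (metis empty_iff empty_set)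
    define bs where "bs = mmg v k 0 [] \<pi>"
    have g1: "[] \<notin> set bs" "Rs v bs \<subseteq> set \<pi>" "Ts v bs \<subseteq> set \<pi>" "Rs v bs \<inter> Ts v bs = {}"
      "\<forall>i\<in>Rs v bs. v i \<le> 1/2" "\<forall>i\<in>Ts v bs. v i \<le> 1/2"
      using G1[OF vpi pine k3] unfolding bs_def by auto
    have "filter (\<lambda>b. b \<noteq> []) bs = bs" by (rule filter_True) (use g1(1) in blast)
    then have MMb: "MM k I = length bs" using MMe unfolding bs_def by simp
    have g2: "real (length bs) \<le> real (card Bs) + (\<Sum>i\<in>Rs v bs. a + b * v i) + 1"
      using G2[OF vpi pine k3 a b c1 c2] setpi unfolding bs_def Bs_def by simp
    have g3: "(\<Sum>j\<in>Bs. card ({i\<in>N. f i = f j} \<inter> Rs v bs)) \<le> card (Ts v bs) + (k - 1)"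
    proof -
      have "\<forall>j\<in>set \<pi>. j \<in> {i\<in>N. f i = f j} \<and> finite {i\<in>N. f i = f j} \<and> card {i\<in>N. f i = f j} \<le> k
          \<and> sum v {i\<in>N. f i = f j} \<le> 1 \<and> (\<forall>i\<in>{i\<in>N. f i = f j}. 0 \<le> v i)"
      proof (intro ballI conjI)
        fix j assume j: "j \<in> set \<pi>"
        show "j \<in> {i\<in>N. f i = f j}" using j setpi by simp
        show "finite {i\<in>N. f i = f j}" unfolding N_def by simp
        show "card {i\<in>N. f i = f j} \<le> k" using feas by blast
        show "sum v {i\<in>N. f i = f j} \<le> 1" using feas by blast
        show "0 \<le> v i" if "i \<in> {i\<in>N. f i = f j}" for i using vpos that by (auto simp: less_imp_le)
      qed
      from G3[OF vpi pine k3 this] show ?thesis using setpi unfolding bs_def Bs_def by simp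
    qed
    have cnt: "(\<Sum>i\<in>Rs v bs. a + b * v i) \<le> (real k * a + b) * real (card (f ` N - f ` Bs))
          + (a * (real k - 1) / 2 + b / 2) * real (card Bs) + a * (real k - 1) / 2"
      "real (card (f ` N - f ` Bs)) = real (card (f ` N)) - real (card Bs)"
    proof -
      have fN: "finite N" unfolding N_def by simp
      have RN: "Rs v bs \<subseteq> N" using g1(2) setpi by simp
      have TN: "Ts v bs \<subseteq> N" using g1(3) setpi by simp
      have pos: "\<forall>i\<in>N. 0 < v i" using vpos by simp
      have k1: "k \<ge> 1" using k3 by simp
      show "(\<Sum>i\<in>Rs v bs. a + b * v i) \<le> (real k * a + b) * real (card (f ` N - f ` Bs))
          + (a * (real k - 1) / 2 + b / 2) * real (card Bs) + a * (real k - 1) / 2"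
        by (rule counting(1)[OF fN RN TN g1(4) g1(5) g1(6) pos feas Bs_def g3 a b k1])
      show "real (card (f ` N - f ` Bs)) = real (card (f ` N)) - real (card Bs)"
        by (rule counting(2)[OF fN RN TN g1(4) g1(5) g1(6) pos feas Bs_def g3 a b k1])
    qed
    have "real (MM k I) \<le> real (card Bs) + (real k * a + b) * (real (OPT k I) - real (card Bs))
          + (a * (real k - 1) / 2 + b / 2) * real (card Bs) + a * (real k - 1) / 2 + 1"
    proof -
      have "(\<Sum>i\<in>Rs v bs. a + b * v i) \<le> (real k * a + b) * (real (OPT k I) - real (card Bs))
          + (a * (real k - 1) / 2 + b / 2) * real (card Bs) + a * (real k - 1) / 2"
        using cnt OPTe by simp
      then show ?thesis using MMb g2 by linarith
    qed
    also have "\<dots> = (real k * a + b) * real (OPT k I) + a * (real k - 1) / 2 + 1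
        + real (card Bs) * (1 + a * (real k - 1) / 2 + b / 2 - (real k * a + b))"
      by (simp add: algebra_simps)
    also have "\<dots> \<le> (real k * a + b) * real (OPT k I) + a * (real k - 1) / 2 + 1"
    proof -
      have "real (card Bs) * (1 + a * (real k - 1) / 2 + b / 2 - (real k * a + b)) \<le> 0"
        using c3 by (intro mult_nonneg_nonpos) auto
      then show ?thesis by linarith
    qed
    finally show ?thesis .
  qed
qed

theorem theorem8:
  fixes k :: nat and I :: "real list"
  assumes "k \<ge> 3"
    and "\<forall>x\<in>set I. 0 < x \<and> x \<le> 1"
  shows "real (MM k I) \<le> (lambda_seq k - 1 / real k) * real (OPT k I) + real k"
proof -
  have L: "lambda_seq k - 1 / real k \<ge> 5/2 - 3 / real k"
  proof -
    have "lambda_seq k \<ge> 3/2 + (real k - 2) / real k" by (rule lambda_bound[OF assms(1)])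
    moreover have "(real k - 2) / real k = 1 - 2 / real k" using assms(1) by (simp add: field_simps)
    ultimately show ?thesis by simp
  qed
  have Onn: "0 \<le> real (OPT k I)" by simp
  show ?thesis
  proof (cases "k = 3")
    case True
    have "real (MM k I) \<le> (real k * (1/2) + 0) * real (OPT k I) + (1/2) * (real k - 1) / 2 + 1"
      by (rule main_param[OF assms]) (use True in auto)
    moreover have "real k * (1/2) + 0 \<le> lambda_seq k - 1 / real k" using L True by simp
    then have "(real k * (1/2) + 0) * real (OPT k I) \<le> (lambda_seq k - 1 / real k) * real (OPT k I)"
      using Onn by (rule mult_right_mono)
    moreover have "(1/2) * (real k - 1) / 2 + 1 \<le> real k" using True by simp
    ultimately show ?thesis by linarith
  next
    case False
    then have k4: "real k \<ge> 4" using assms(1) by simp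
    define a :: real where "a = 1 / real k"
    define b :: real where "b = 3/2 - 3 / real k"
    have kpos: "real k > 0" using k4 by simp
    have ka: "real k * a = 1" unfolding a_def using kpos by simp
    have a0: "0 \<le> a" unfolding a_def by simp
    have b0: "0 \<le> b" unfolding b_def using k4 by (simp add: field_simps)
    have c2: "1 \<le> 2 * a + 2 * b / 3" unfolding a_def b_def using kpos by (simp add: field_simps)
    have c3: "1 + a * (real k - 1) / 2 + b / 2 \<le> real k * a + b"
      unfolding a_def b_def using k4 kpos by (simp add: field_simps)
    have "real (MM k I) \<le> (real k * a + b) * real (OPT k I) + a * (real k - 1) / 2 + 1"
      by (rule main_param[OF assms a0 b0 _ c2 c3]) (use ka in simp)
    moreover have "real k * a + b \<le> lambda_seq k - 1 / real k" using L ka unfolding b_def by simp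
    moreover have "a * (real k - 1) / 2 + 1 \<le> real k"
    proof -
      have "a * (real k - 1) \<le> a * real k" using a0 by (intro mult_left_mono) auto
      then show ?thesis using ka k4 by (simp add: mult.commute)
    qed
    moreover have "(real k * a + b) * real (OPT k I) \<le> (lambda_seq k - 1 / real k) * real (OPT k I)"
      using Onn \<open>real k * a + b \<le> lambda_seq k - 1 / real k\<close> by (intro mult_right_mono)
    ultimately show ?thesis by linarith
  qed
qed

end
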